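(* Let $a>0$, $b\in\mathbb{R}$, $C>0$ with $b=2a'C^2$ (where $a'\in\mathbb{R}$), and $\omega=a^2/4$. Let $\alpha=a+b/2$, $\beta=b/2$, let $k_\pm(\lambda)=\sqrt{-\omega\mp i\lambda}$ be the branches analytic on $\mathbb{C}\setminus\mathcal{C}_\pm$ with $\operatorname{Im}k_\pm(\lambda)>0$ there, where $\mathcal{C}_+=[i\omega,i\infty)$, $\mathcal{C}_-=(-i\infty,-i\omega]$, and let $$ D(\lambda)=\alpha^2+2i\alpha(k_++k_-)-4k_+k_--\beta^2,\qquad \lambda\in\mathbb{C}\setminus(\mathcal{C}_+\cup\mathcal{C}_-). $$ If $a'=a/C^2$ then $\lambda=0$ is a zero of $D$ of multiplicity $4$; otherwise $\lambda=0$ is a zero of $D$ of multiplicity $2$.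
   Context: $D(\lambda)$ is the determinant whose zeros give the poles of the resolvent of the linearization $\mathbf C$ at the solitary wave $Ce^{-\sqrt\omega|x|}$, with $a=a(C^2)$, $a'=a'(C^2)$. *)

theory Defs
  imports "HOL-Complex_Analysis.Complex_Analysis"
begin

text \<open>Branches k_plus, k_minus of sqrt(-omega -/+ i lambda) with positive imaginary part
  off the cuts [i omega, i inf) resp. (-i inf, -i omega]: k = i * csqrt(omega +/- i lambda),
  csqrt being the principal square root (Re >= 0, cut on the negative reals).\<close>

definition k_plus :: "real \<Rightarrow> complex \<Rightarrow> complex" where
  "k_plus \<omega> z = \<i> * csqrt (complex_of_real \<omega> + \<i> * z)"

definition k_minus :: "real \<Rightarrow> complex \<Rightarrow> complex" where
  "k_minus \<omega> z = \<i> * csqrt (complex_of_real \<omega> - \<i> * z)"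

definition Dfun :: "real \<Rightarrow> real \<Rightarrow> real \<Rightarrow> complex \<Rightarrow> complex" where
  "Dfun \<omega> \<alpha> \<beta> z =
     (complex_of_real \<alpha>)\<^sup>2 + 2 * \<i> * complex_of_real \<alpha> * (k_plus \<omega> z + k_minus \<omega> z)
     - 4 * k_plus \<omega> z * k_minus \<omega> z - (complex_of_real \<beta>)\<^sup>2"

definition zero_of_multiplicity :: "(complex \<Rightarrow> complex) \<Rightarrow> complex \<Rightarrow> nat \<Rightarrow> bool" where
  "zero_of_multiplicity f z n \<longleftrightarrow> f z = 0 \<and> isolated_zero f z \<and> zorder f z = int n"

end

theory Submission
  imports Defs
begin

lemma alg1:
  fixes s1 s2 z w A B :: complex
  assumes "s1^2 = w + \<i>*z" "s2^2 = w - \<i>*z" "w = A^2/4"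
  shows "((A+B)^2 - 2*(A+B)*(s1+s2) + 4*(s1 * s2) - B^2) * ((s1+s2)+A) * (s1 * s2+w)
         = 4*z^2*((s1+s2) - B)"
proof -
  have u2: "(s1+s2)^2 = 2*w + 2*(s1 * s2)"
  proof -
    have "(s1+s2)^2 = s1^2+s2^2+2*(s1 * s2)" by (simp add: power2_eq_square algebra_simps)
    then show ?thesis using assms(1,2) by simp
  qed
  have p2: "(s1 * s2)^2 = w^2 + z^2"
  proof -
    have "(s1 * s2)^2 = s1^2 * s2^2" by (simp add: power_mult_distrib)
    also have "\<dots> = (w + \<i>*z) * (w - \<i>*z)" using assms(1,2) by simp
    also have "\<dots> = w^2 + z^2" by (simp add: power2_eq_square algebra_simps)
    finally show ?thesis .
  qed
  have A2: "A^2 = 4*w" using assms(3) by (simp add: mult.commute)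
  define u where "u = s1+s2"
  define p where "p = s1 * s2"
  have u2': "u^2 = 2*w + 2*p" using u2 by (simp add: u_def p_def)
  have p2': "p^2 = w^2+z^2" using p2 by (simp add: p_def)
  have "((A+B)^2 - 2*(A+B)*u + 4*p - B^2) * (u+A) * (p+w) = 4*z^2*(u - B)"
  proof -
    have e1: "((A+B)^2 - 2*(A+B)*u + 4*p - B^2) * (u+A)
        = -2*(A+B)*(u^2 - A^2) + 4*(p-w)*(u+A)"
      using A2 by algebra
    also have "\<dots> = 4*(p-w)*(u-B)"
      using A2 u2' by algebra
    finally have "((A+B)^2 - 2*(A+B)*u + 4*p - B^2) * (u+A) * (p+w) = 4*(p^2-w^2)*(u-B)"
      by algebra
    then show ?thesis using p2' by simp
  qed
  then show ?thesis by (simp add: u_def p_def)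
qed

lemma alg2:
  fixes s1 s2 z w A :: complex
  assumes "s1^2 = w + \<i>*z" "s2^2 = w - \<i>*z" "w = A^2/4"
  shows "((A+A)^2 - 2*(A+A)*(s1+s2) + 4*(s1 * s2) - A^2) * ((s1+s2)+A)^2 * (s1 * s2+w)^2
         = 8*z^4"
proof -
  have u2: "(s1+s2)^2 = 2*w + 2*(s1 * s2)"
  proof -
    have "(s1+s2)^2 = s1^2+s2^2+2*(s1 * s2)" by (simp add: power2_eq_square algebra_simps)
    then show ?thesis using assms(1,2) by simp
  qed
  have p2: "(s1 * s2)^2 = w^2 + z^2"
  proof -
    have "(s1 * s2)^2 = s1^2 * s2^2" by (simp add: power_mult_distrib)
    also have "\<dots> = (w + \<i>*z) * (w - \<i>*z)" using assms(1,2) by simp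
    also have "\<dots> = w^2 + z^2" by (simp add: power2_eq_square algebra_simps)
    finally show ?thesis .
  qed
  have A2: "A^2 = 4*w" using assms(3) by (simp add: mult.commute)
  have e: "((s1+s2) - A)*((s1+s2)+A)*(s1 * s2+w) = 2*z^2"
  proof -
    have "((s1+s2) - A)*((s1+s2)+A)*(s1 * s2+w) = ((s1+s2)^2 - A^2)*(s1 * s2+w)"
      by (simp add: power2_eq_square algebra_simps)
    also have "\<dots> = 2*((s1 * s2)^2 - w^2)" using u2 A2
      by algebra
    finally show ?thesis using p2 by simp
  qed
  have "((A+A)^2 - 2*(A+A)*(s1+s2) + 4*(s1 * s2) - A^2) * ((s1+s2)+A)^2 * (s1 * s2+w)^2
     = (((A+A)^2 - 2*(A+A)*(s1+s2) + 4*(s1 * s2) - A^2) * ((s1+s2)+A) * (s1 * s2+w))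
       * ((s1+s2)+A) * (s1 * s2+w)"
    by (simp add: power2_eq_square algebra_simps)
  also have "\<dots> = 4*z^2*(((s1+s2) - A)*((s1+s2)+A)*(s1 * s2+w))"
    using alg1[OF assms, of A] by algebra
  also have "\<dots> = 8*z^4" using e by (simp add: power2_eq_square power4_eq_xxxx)
  finally show ?thesis .
qed


lemma mult_zero_lemma:
  fixes f g :: "complex \<Rightarrow> complex"
  assumes S: "open S" "0 \<in> S" and hol: "g holomorphic_on S" and g0: "g 0 \<noteq> 0"
    and fg: "\<And>z. f z = g z * z ^ n" and n: "n > 0"
  shows "zero_of_multiplicity f 0 n"
proof -
  have cg: "isCont g 0"
    using hol S holomorphic_on_imp_continuous_on continuous_on_eq_continuous_at by blast
  have fe: "f = (\<lambda>z. g z * z ^ n)" using fg by auto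
  have cf: "isCont f 0" unfolding fe using cg by (intro continuous_intros)
  have f0: "f 0 = 0" using fg n by simp
  have lim: "f \<midarrow>0\<rightarrow> 0" using cf f0 isCont_def by metis
  have ev1: "eventually (\<lambda>z. g z \<noteq> 0) (at 0)"
    using cg g0 isCont_def tendsto_imp_eventually_ne by blast
  have ev2: "eventually (\<lambda>z. z \<noteq> (0::complex)) (at 0)"
    by (simp add: eventually_neq_at_within)
  have "eventually (\<lambda>z. f z \<noteq> 0) (at 0)"
    using eventually_conj[OF ev1 ev2] by eventually_elim (simp add: fg)
  hence iz: "isolated_zero f 0" using lim by (simp add: isolated_zero_def)
  have "zorder f 0 = int n"
    by (rule zorder_eqI[OF S hol g0]) (simp add: fg)
  then show ?thesis using f0 iz by (simp add: zero_of_multiplicity_def)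
qed

theorem lemmaA2:
  fixes a a' C b \<omega> \<alpha> \<beta> :: real
  assumes "a > 0" and "C > 0"
    and "b = 2 * a' * C\<^sup>2" and "\<omega> = a\<^sup>2 / 4"
    and "\<alpha> = a + b / 2" and "\<beta> = b / 2"
  shows "(a' = a / C\<^sup>2 \<longrightarrow> zero_of_multiplicity (Dfun \<omega> \<alpha> \<beta>) 0 4)
       \<and> (a' \<noteq> a / C\<^sup>2 \<longrightarrow> zero_of_multiplicity (Dfun \<omega> \<alpha> \<beta>) 0 2)"
proof -
  define w where "w = complex_of_real \<omega>"
  define A where "A = complex_of_real a"
  define B where "B = complex_of_real \<beta>"
  define s1 where "s1 = (\<lambda>z. csqrt (w + \<i> * z))"
  define s2 where "s2 = (\<lambda>z. csqrt (w - \<i> * z))"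
  have om: "\<omega> > 0" using assms(1) unfolding assms(4) by simp
  have wA: "w = A^2/4" unfolding w_def A_def assms(4) by simp
  have s1sq: "\<And>z. (s1 z)^2 = w + \<i> * z" by (simp add: s1_def)
  have s2sq: "\<And>z. (s2 z)^2 = w - \<i> * z" by (simp add: s2_def)
  have ab: "\<alpha> = a + \<beta>" using assms(5,6) by simp
  have Deq: "\<And>z. Dfun \<omega> \<alpha> \<beta> z = (A+B)^2 - 2*(A+B)*(s1 z + s2 z) + 4*(s1 z * s2 z) - B^2"
    using ab by (simp add: Dfun_def k_plus_def k_minus_def s1_def s2_def w_def A_def B_def
       algebra_simps power2_eq_square)
  have nz1: "\<And>z. s1 z + s2 z + A \<noteq> 0"
  proof
    fix z assume "s1 z + s2 z + A = 0"
    hence "Re (s1 z + s2 z + A) = 0" by simp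
    moreover have "Re (s1 z) \<ge> 0" "Re (s2 z) \<ge> 0" unfolding s1_def s2_def by (rule Re_csqrt)+
    ultimately show False using assms(1) by (simp add: A_def)
  qed
  have nz2: "\<And>z. s1 z * s2 z + w \<noteq> 0"
  proof
    fix z assume h: "s1 z * s2 z + w = 0"
    have "(s1 z * s2 z)^2 = (w + \<i> * z) * (w - \<i> * z)"
      by (simp add: power_mult_distrib s1sq s2sq)
    also have "\<dots> = w^2 + z^2" by (simp add: power2_eq_square algebra_simps)
    finally have "(s1 z * s2 z)^2 = w^2 + z^2" .
    moreover have "s1 z * s2 z = - w" using h by (simp add: add_eq_0_iff)
    ultimately have "z = 0" by simp
    hence "s1 z * s2 z = of_real (sqrt \<omega>) * of_real (sqrt \<omega>)"
      using om by (simp add: s1_def s2_def w_def)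
    also have "\<dots> = w" using om by (simp add: w_def flip: of_real_mult)
    finally show False using h om w_def by simp
  qed
  have s0: "s1 0 = A/2" "s2 0 = A/2"
  proof -
    have "\<omega> = (a/2)^2" unfolding assms(4) by (simp add: power_divide)
    hence "sqrt \<omega> * 2 = a" using assms(1) by simp
    hence "complex_of_real (sqrt \<omega>) * 2 = complex_of_real a"
      by (metis of_real_mult of_real_numeral)
    then show "s1 0 = A/2" "s2 0 = A/2" using om by (simp_all add: s1_def s2_def w_def A_def)
  qed
  define S where "S = ball (0::complex) \<omega>"
  have S: "open S" "0 \<in> S" using om by (simp_all add: S_def)
  have h1: "s1 holomorphic_on S" unfolding s1_def
  proof (intro holomorphic_intros)
    fix z assume "z \<in> S"
    hence "\<bar>Im z\<bar> < \<omega>" using abs_Im_le_cmod[of z] by (simp add: S_def)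
    then show "w + \<i> * z \<notin> \<real>\<^sub>\<le>\<^sub>0" by (simp add: complex_nonpos_Reals_iff w_def)
  qed
  have h2: "s2 holomorphic_on S" unfolding s2_def
  proof (intro holomorphic_intros)
    fix z assume "z \<in> S"
    hence "\<bar>Im z\<bar> < \<omega>" using abs_Im_le_cmod[of z] by (simp add: S_def)
    then show "w - \<i> * z \<notin> \<real>\<^sub>\<le>\<^sub>0" by (simp add: complex_nonpos_Reals_iff w_def)
  qed
  have iff: "a' = a / C\<^sup>2 \<longleftrightarrow> \<beta> = a"
    using assms(2,3,6) by (auto simp: field_simps)
  show ?thesis
  proof (intro conjI impI)
    assume "a' = a / C\<^sup>2"
    hence BA: "B = A" using iff by (simp add: A_def B_def)
    define g where "g = (\<lambda>z. 8 / ((s1 z + s2 z + A)^2 * (s1 z * s2 z + w)^2))"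
    show "zero_of_multiplicity (Dfun \<omega> \<alpha> \<beta>) 0 4"
    proof (rule mult_zero_lemma[OF S, of g])
      show "g holomorphic_on S" unfolding g_def using h1 h2 nz1 nz2
        by (intro holomorphic_intros) auto
      show "g 0 \<noteq> 0" unfolding g_def using nz1 nz2 by simp
      fix z
      have e: "Dfun \<omega> \<alpha> \<beta> z * ((s1 z + s2 z + A)^2 * (s1 z * s2 z + w)^2) = 8 * z^4"
        using alg2[OF s1sq[of z] s2sq[of z] wA] by (simp add: Deq BA mult.assoc)
      show "Dfun \<omega> \<alpha> \<beta> z = g z * z ^ 4"
      proof -
        have M: "(s1 z + s2 z + A)^2 * (s1 z * s2 z + w)^2 \<noteq> 0" using nz1[of z] nz2[of z] by simp
        have "Dfun \<omega> \<alpha> \<beta> z = (8 * z^4) / ((s1 z + s2 z + A)^2 * (s1 z * s2 z + w)^2)"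
          using e M by (simp add: eq_divide_eq)
        then show ?thesis unfolding g_def by (simp add: ac_simps)
      qed
    qed simp
  next
    assume "a' \<noteq> a / C\<^sup>2"
    hence BA: "B \<noteq> A" using iff by (simp add: A_def B_def)
    define g where "g = (\<lambda>z. 4 * (s1 z + s2 z - B) / ((s1 z + s2 z + A) * (s1 z * s2 z + w)))"
    show "zero_of_multiplicity (Dfun \<omega> \<alpha> \<beta>) 0 2"
    proof (rule mult_zero_lemma[OF S, of g])
      show "g holomorphic_on S" unfolding g_def using h1 h2 nz1 nz2
        by (intro holomorphic_intros) auto
      have "s1 0 + s2 0 - B \<noteq> 0" using BA by (simp add: s0)
      then show "g 0 \<noteq> 0" unfolding g_def using nz1[of 0] nz2[of 0] by (simp only: divide_eq_0_iff mult_eq_0_iff right_minus_eq) simp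
      fix z
      have e: "Dfun \<omega> \<alpha> \<beta> z * ((s1 z + s2 z + A) * (s1 z * s2 z + w)) = 4 * z^2 * (s1 z + s2 z - B)"
        using alg1[OF s1sq[of z] s2sq[of z] wA, of B] by (simp add: Deq mult.assoc)
      show "Dfun \<omega> \<alpha> \<beta> z = g z * z ^ 2"
      proof -
        have M: "(s1 z + s2 z + A) * (s1 z * s2 z + w) \<noteq> 0" using nz1[of z] nz2[of z] by simp
        have "Dfun \<omega> \<alpha> \<beta> z = (4 * z^2 * (s1 z + s2 z - B)) / ((s1 z + s2 z + A) * (s1 z * s2 z + w))"
          using e M by (simp add: eq_divide_eq)
        then show ?thesis unfolding g_def by (simp add: ac_simps)
      qed
    qed simp
  qed
qed

end
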